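(* Consider the packet spreading algorithm described in the context with $N=2$ and $K_1\ge K_2$. Then $x_n^{K-1}=K_n$ for $n=1,2$; that is, the output pattern $P$ of length $K=K_1+K_2$ contains exactly $K_n$ occurrences of source $n$.
   Context: Packet spreading algorithm: Let $N\ge 2$, let $K_1,\dots,K_N$ be positive integers and $K=\sum_{n=1}^N K_n$. The algorithm runs iterations $k=0,1,\dots,K-1$ and maintains deficit counters $B_n^k$, $1\le n\le N$, with $B_n^0=0$ for all $n$. In iteration $k$, define the quantums $Q_n^k=\frac{(1-B_n^k)K}{K_n}$; select a source $m_k\in\arg\min_{1\le n\le N} Q_n^k$ (ties broken arbitrarily); let $Q=Q_{m_k}^k$; set $B_n^{k+1}=B_n^k+Q\frac{K_n}{K}$ for $n\neq m_k$ and $B_{m_k}^{k+1}=0$; and set the $k$-th entry of the output pattern to $P(k)=m_k$. For $0\le k\le K-1$, $x_n^k$ denotes the number of indices $k'\in\{0,\dots,k\}$ with $m_{k'}=n$, i.e. the number of source-$n$ instances inserted into the pattern after iteration $k$. *)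

theory Defs
  imports Main "HOL.Real"
begin

text \<open>Packet spreading algorithm. Sources are 1..N, Ks n = K_n, B k n = deficit counter
  B_n^k, m k = selected source m_k in iteration k. Ties are broken arbitrarily: any
  minimiser is allowed.\<close>

definition total :: "nat \<Rightarrow> (nat \<Rightarrow> nat) \<Rightarrow> nat" where
  "total N Ks = (\<Sum>n=1..N. Ks n)"

definition quantum :: "nat \<Rightarrow> (nat \<Rightarrow> nat) \<Rightarrow> (nat \<Rightarrow> nat \<Rightarrow> real) \<Rightarrow> nat \<Rightarrow> nat \<Rightarrow> real" where
  "quantum N Ks B k n = (1 - B k n) * real (total N Ks) / real (Ks n)"

definition valid_run :: "nat \<Rightarrow> (nat \<Rightarrow> nat) \<Rightarrow> (nat \<Rightarrow> nat \<Rightarrow> real) \<Rightarrow> (nat \<Rightarrow> nat) \<Rightarrow> bool" where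
  "valid_run N Ks B m \<longleftrightarrow>
     (\<forall>n\<in>{1..N}. B 0 n = 0) \<and>
     (\<forall>k < total N Ks.
        m k \<in> {1..N} \<and>
        (\<forall>n\<in>{1..N}. quantum N Ks B k (m k) \<le> quantum N Ks B k n) \<and>
        B (Suc k) (m k) = 0 \<and>
        (\<forall>n\<in>{1..N}. n \<noteq> m k \<longrightarrow>
            B (Suc k) n = B k n + quantum N Ks B k (m k) * real (Ks n) / real (total N Ks)))"

definition count_src :: "(nat \<Rightarrow> nat) \<Rightarrow> nat \<Rightarrow> nat \<Rightarrow> nat" where
  "count_src m n k = card {k'. k' \<le> k \<and> m k' = n}"

end

theory Submission
  imports Defs
begin

lemma card_Suc_split: "card {k'. k' < Suc k \<and> P k'} = card {k'. k' < k \<and> P k'} + (if P k then 1 else 0)"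
proof -
  have "{k'. k' < Suc k \<and> P k'} = (if P k then insert k {k'. k' < k \<and> P k'} else {k'. k' < k \<and> P k'})"
    by (auto simp: less_Suc_eq)
  then show ?thesis by simp
qed

lemma helper: fixes x y K a b :: real assumes "K>0" "a>0" "b>0" "x*(K/a) \<le> y*(K/b)" shows "x*b \<le> y*a"
proof -
  have "x*(K/a)*(a*b/K) \<le> y*(K/b)*(a*b/K)" using assms by (intro mult_right_mono) auto
  moreover have "x*(K/a)*(a*b/K) = x*b" using assms by (simp add: field_simps)
  moreover have "y*(K/b)*(a*b/K) = y*a" using assms by (simp add: field_simps)
  ultimately show ?thesis by simp
qed

theorem mainTheorem3:
  fixes Ks :: "nat \<Rightarrow> nat" and B :: "nat \<Rightarrow> nat \<Rightarrow> real" and m :: "nat \<Rightarrow> nat"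
  assumes "Ks 1 > 0" and "Ks 2 > 0" and "Ks 1 \<ge> Ks 2"
    and "valid_run 2 Ks B m"
  shows "\<forall>n\<in>{1,2}. count_src m n (total 2 Ks - 1) = Ks n"
proof -
  define a where "a = Ks 1"
  define b where "b = Ks 2"
  define K where "K = total 2 Ks"
  have Kab: "K = a + b" unfolding K_def a_def b_def total_def by (simp add: numeral_2_eq_2)
  have apos: "a > 0" and bpos: "b > 0" using assms a_def b_def by auto
  define c where "c n k = card {k'. k' < k \<and> m k' = n}" for n k
  define Q where "Q k n = quantum 2 Ks B k n" for k n
  have Qf: "Q k n = (1 - B k n) * real K / real (Ks n)" for k n
    unfolding Q_def quantum_def K_def by simp
  have V: "valid_run 2 Ks B m" by fact
  have B0: "B 0 1 = 0" "B 0 2 = 0" using V unfolding valid_run_def by auto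
  have step: "(m k = 1 \<or> m k = 2) \<and> Q k (m k) \<le> Q k 1 \<and> Q k (m k) \<le> Q k 2 \<and> B (Suc k) (m k) = 0
     \<and> (\<forall>n\<in>{1,2}. n \<noteq> m k \<longrightarrow> B (Suc k) n = B k n + Q k (m k) * real (Ks n) / real K)"
    if "k < K" for k
  proof -
    have H: "\<forall>k < total 2 Ks.
        m k \<in> {1..2} \<and> (\<forall>n\<in>{1..2}. quantum 2 Ks B k (m k) \<le> quantum 2 Ks B k n) \<and>
        B (Suc k) (m k) = 0 \<and>
        (\<forall>n\<in>{1..2}. n \<noteq> m k \<longrightarrow>
            B (Suc k) n = B k n + quantum 2 Ks B k (m k) * real (Ks n) / real (total 2 Ks))"
      using V unfolding valid_run_def by (rule conjunct2)
    have kt: "k < total 2 Ks" using that K_def by simp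
    note X = mp[OF spec[OF H, of k] kt]
    have i1: "(1::nat) \<in> {1..2}" and i2: "(2::nat) \<in> {1..2}" by auto
    have A1: "m k \<in> {1..2}" using X by (rule conjunct1)
    have A2: "\<forall>n\<in>{1..2}. Q k (m k) \<le> Q k n" using X unfolding Q_def by blast
    have A3: "B (Suc k) (m k) = 0" using X by blast
    have A4: "\<forall>n\<in>{1..2}. n \<noteq> m k \<longrightarrow> B (Suc k) n = B k n + Q k (m k) * real (Ks n) / real K"
      using X unfolding Q_def K_def by blast
    have "m k = 1 \<or> m k = 2" using A1 by auto
    moreover have "Q k (m k) \<le> Q k 1" "Q k (m k) \<le> Q k 2" using A2 i1 i2 by blast+
    moreover have "\<forall>n\<in>{1,2}. n \<noteq> m k \<longrightarrow> B (Suc k) n = B k n + Q k (m k) * real (Ks n) / real K"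
    proof
      fix n :: nat assume "n \<in> {1,2}"
      then have "n \<in> {1..2}" by auto
      then show "n \<noteq> m k \<longrightarrow> B (Suc k) n = B k n + Q k (m k) * real (Ks n) / real K" using A4 by blast
    qed
    ultimately show ?thesis using A3 by blast
  qed
  have cS: "c n (Suc k) = c n k + (if m k = n then 1 else 0)" for n k
    unfolding c_def by (rule card_Suc_split)
  have csum: "k \<le> K \<Longrightarrow> c 1 k + c 2 k = k" for k
  proof (induction k)
    case 0 then show ?case by (simp add: c_def)
  next
    case (Suc k)
    then have "m k = 1 \<or> m k = 2" using step by auto
    then show ?case using Suc cS by auto
  qed
  have Kpos: "real K > 0" using Kab apos by simp
  have rap: "real a > 0" and rbp: "real b > 0" using apos bpos by auto
  have inv: "k \<le> K \<Longrightarrow> Q k 1 - Q k 2 = (real (c 1 k) + 1) * (K/a) - (real (c 2 k) + 1) * (K/b)" for k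
  proof (induction k)
    case 0
    have "Q 0 1 = K/a" unfolding Qf B0 a_def by simp
    moreover have "Q 0 2 = K/b" unfolding Qf B0 b_def by simp
    ultimately show ?case by (simp add: c_def)
  next
    case (Suc k)
    then have kl: "k < K" and IH: "Q k 1 - Q k 2 = (real (c 1 k) + 1) * (K/a) - (real (c 2 k) + 1) * (K/b)" by auto
    note st = step[OF kl]
    show ?case
    proof (cases "m k = 1")
      case True
      have e1: "Q (Suc k) 1 = K/a" using st True by (simp add: Qf a_def)
      have "B (Suc k) 2 = B k 2 + Q k 1 * b / K" using st True by (auto simp: b_def)
      then have "Q (Suc k) 2 = (1 - B k 2 - Q k 1 * b / K) * K / b" by (simp add: Qf b_def)
      also have "\<dots> = (1 - B k 2) * K / b - Q k 1" using Kpos bpos by (simp add: field_simps)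
      also have "\<dots> = Q k 2 - Q k 1" by (simp add: Qf b_def)
      finally have e2: "Q (Suc k) 2 = Q k 2 - Q k 1" .
      have ring1: "\<And>x y pa pb q1 q2::real. q1 - q2 = (x+1)*pa - (y+1)*pb \<Longrightarrow> pa - (q2 - q1) = (x+1+1)*pa - (y+1)*pb"
        by (simp add: algebra_simps)
      have ring2: "\<And>x y pa pb q1 q2::real. q1 - q2 = (x+1)*pa - (y+1)*pb \<Longrightarrow> (q1 - q2) - pb = (x+1)*pa - (y+1+1)*pb"
        by (simp add: algebra_simps)
      have c1e: "real (c 1 (Suc k)) = real (c 1 k) + (if m k = 1 then 1 else 0)" using cS[of 1 k] by simp
      have c2e: "real (c 2 (Suc k)) = real (c 2 k) + (if m k = 2 then 1 else 0)" using cS[of 2 k] by simp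
      show ?thesis unfolding e1 e2 c1e c2e using True ring1[OF IH] by simp
    next
      case False
      then have T: "m k = 2" using st by auto
      have e1: "Q (Suc k) 2 = K/b" using st T by (simp add: Qf b_def)
      have "B (Suc k) 1 = B k 1 + Q k 2 * a / K" using st T by (auto simp: a_def)
      then have "Q (Suc k) 1 = (1 - B k 1 - Q k 2 * a / K) * K / a" by (simp add: Qf a_def)
      also have "\<dots> = (1 - B k 1) * K / a - Q k 2" using Kpos apos by (simp add: field_simps)
      also have "\<dots> = Q k 1 - Q k 2" by (simp add: Qf a_def)
      finally have e2: "Q (Suc k) 1 = Q k 1 - Q k 2" .
      have ring1: "\<And>x y pa pb q1 q2::real. q1 - q2 = (x+1)*pa - (y+1)*pb \<Longrightarrow> pa - (q2 - q1) = (x+1+1)*pa - (y+1)*pb"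
        by (simp add: algebra_simps)
      have ring2: "\<And>x y pa pb q1 q2::real. q1 - q2 = (x+1)*pa - (y+1)*pb \<Longrightarrow> (q1 - q2) - pb = (x+1)*pa - (y+1+1)*pb"
        by (simp add: algebra_simps)
      have c1e: "real (c 1 (Suc k)) = real (c 1 k) + (if m k = 1 then 1 else 0)" using cS[of 1 k] by simp
      have c2e: "real (c 2 (Suc k)) = real (c 2 k) + (if m k = 2 then 1 else 0)" using cS[of 2 k] by simp
      show ?thesis unfolding e1 e2 c1e c2e using T ring2[OF IH] by simp
    qed
  qed
  have bound: "k \<le> K \<Longrightarrow> c 1 k \<le> a \<and> c 2 k \<le> b" for k
  proof (induction k)
    case 0 then show ?case by (simp add: c_def)
  next
    case (Suc k)
    then have kl: "k < K" and IH: "c 1 k \<le> a \<and> c 2 k \<le> b" by auto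
    note st = step[OF kl]
    have ck: "c 1 k + c 2 k = k" using csum kl by simp
    have I: "Q k 1 - Q k 2 = (real (c 1 k) + 1) * (K/a) - (real (c 2 k) + 1) * (K/b)" using inv kl by simp
    show ?case
    proof (rule ccontr)
      assume nc: "\<not> ?case"
      show False
      proof (cases "m k = 1")
        case True
        have c1: "c 1 k = a" using nc IH cS[of 1 k] cS[of 2 k] True by auto
        have "Q k (m k) \<le> Q k 2" using st by blast
        then have "Q k 1 \<le> Q k 2" using True by simp
        then have "(real a + 1) * (K/a) - (real (c 2 k) + 1) * (K/b) \<le> 0" using I unfolding c1 by linarith
        then have "(real a + 1) * (K/a) \<le> (real (c 2 k) + 1) * (K/b)" by simp
        then have "(real a + 1) * real b \<le> (real (c 2 k) + 1) * real a" by (rule helper[OF Kpos rap rbp])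
        then have "real ((a + 1) * b) \<le> real ((c 2 k + 1) * a)"by (simp only: of_nat_mult of_nat_add of_nat_1)
        then have "(a + 1) * b \<le> (c 2 k + 1) * a" by (simp only: of_nat_le_iff)
        then have "c 2 k \<ge> b"
        proof -
          assume h: "(a + 1) * b \<le> (c 2 k + 1) * a"
          show ?thesis
          proof (rule ccontr)
            assume "\<not> b \<le> c 2 k"
            then have "c 2 k + 1 \<le> b" by simp
            then have "(c 2 k + 1) * a \<le> b * a" by (rule mult_right_mono) simp_all
            moreover have "(a + 1) * b = a * b + b" by simp
            ultimately show False using h bpos by (simp add: mult.commute)
          qed
        qed
        then show False using ck c1 kl Kab by simp
      next
        case False
        then have T: "m k = 2" using st by auto
        have c2: "c 2 k = b" using nc IH cS[of 1 k] cS[of 2 k] T by auto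
        have "Q k (m k) \<le> Q k 1" using st by blast
        then have "Q k 2 \<le> Q k 1" using T by simp
        then have "(real b + 1) * (K/b) - (real (c 1 k) + 1) * (K/a) \<le> 0" using I unfolding c2 by linarith
        then have "(real b + 1) * (K/b) \<le> (real (c 1 k) + 1) * (K/a)" by simp
        then have "(real b + 1) * real a \<le> (real (c 1 k) + 1) * real b" by (rule helper[OF Kpos rbp rap])
        then have "real ((b + 1) * a) \<le> real ((c 1 k + 1) * b)"by (simp only: of_nat_mult of_nat_add of_nat_1)
        then have "(b + 1) * a \<le> (c 1 k + 1) * b" by (simp only: of_nat_le_iff)
        then have "c 1 k \<ge> a"
        proof -
          assume h: "(b + 1) * a \<le> (c 1 k + 1) * b"
          show ?thesis
          proof (rule ccontr)
            assume "\<not> a \<le> c 1 k"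
            then have "c 1 k + 1 \<le> a" by simp
            then have "(c 1 k + 1) * b \<le> a * b" by (rule mult_right_mono) simp_all
            moreover have "(b + 1) * a = b * a + a" by simp
            ultimately show False using h apos by (simp add: mult.commute)
          qed
        qed
        then show False using ck c2 kl Kab by simp
      qed
    qed
  qed
  have fin: "c 1 K = a" "c 2 K = b" using bound[of K] csum[of K] Kab by auto
  have cnt: "count_src m n (total 2 Ks - 1) = c n K" for n
  proof -
    have "Suc (total 2 Ks - 1) = K" using Kab apos K_def by simp
    moreover have "{k'. k' \<le> total 2 Ks - 1 \<and> m k' = n} = {k'. k' < Suc (total 2 Ks - 1) \<and> m k' = n}"
      by auto
    ultimately show ?thesis unfolding count_src_def c_def by simp
  qed
  show ?thesis using cnt fin a_def b_def by auto
qed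

end
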